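(* Let $H$ be a $3$-uniform hypergraph on $8$ vertices not containing a Fano plane. If $H$ contains the complete $3$-uniform hypergraph $K_6^{(3)}$ on $6$ vertices, then $e(H)\le 46<b(8)$, where $b(8)=48$.
   Context: $e(H)$ is the number of edges. "Containing" means having a (not necessarily induced) subhypergraph isomorphic to it. The Fano plane is the hypergraph on vertex set $\{1,\dots,7\}$ with edges $123,345,156,147,367,257,246$. $b(n)=\frac{n-2}{2}\lfloor n^2/4\rfloor$ is the number of edges of the balanced complete bipartite $3$-uniform hypergraph on $n$ vertices. *)

theory Defs
  imports Complex_Main
begin

definition uniform3 :: "'a set \<Rightarrow> 'a set set \<Rightarrow> bool" where
  "uniform3 V E \<longleftrightarrow> (\<forall>e\<in>E. e \<subseteq> V \<and> card e = 3)"

definition fano_edges :: "nat set set" where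
  "fano_edges = {{1,2,3},{3,4,5},{1,5,6},{1,4,7},{3,6,7},{2,5,7},{2,4,6}}"

definition contains_fano :: "'a set \<Rightarrow> 'a set set \<Rightarrow> bool" where
  "contains_fano V E \<longleftrightarrow>
     (\<exists>f. inj_on f {1..7} \<and> f ` {1..7} \<subseteq> V \<and> (\<forall>e\<in>fano_edges. f ` e \<in> E))"

definition contains_K6_3 :: "'a set \<Rightarrow> 'a set set \<Rightarrow> bool" where
  "contains_K6_3 V E \<longleftrightarrow>
     (\<exists>S. S \<subseteq> V \<and> card S = 6 \<and> (\<forall>e. e \<subseteq> S \<and> card e = 3 \<longrightarrow> e \<in> E))"

definition b :: "nat \<Rightarrow> real" where
  "b n = (real n - 2) / 2 * real (n^2 div 4)"

end

theory Submission
  imports Defs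
begin

definition L15 :: "(nat \<times> nat) set" where
  "L15 = {(0,1),(0,2),(0,3),(0,4),(0,5),(1,2),(1,3),(1,4),(1,5),(2,3),(2,4),(2,5),(3,4),(3,5),(4,5)}"

lemma match_count:
  fixes m :: "nat \<times> nat \<Rightarrow> nat"
  assumes "m(0,1)+m(2,3)+m(4,5) \<ge> 1" "m(0,1)+m(2,4)+m(3,5) \<ge> 1" "m(0,1)+m(2,5)+m(3,4) \<ge> 1"
    "m(0,2)+m(1,3)+m(4,5) \<ge> 1" "m(0,2)+m(1,4)+m(3,5) \<ge> 1" "m(0,2)+m(1,5)+m(3,4) \<ge> 1"
    "m(0,3)+m(1,2)+m(4,5) \<ge> 1" "m(0,3)+m(1,4)+m(2,5) \<ge> 1" "m(0,3)+m(1,5)+m(2,4) \<ge> 1"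
    "m(0,4)+m(1,2)+m(3,5) \<ge> 1" "m(0,4)+m(1,3)+m(2,5) \<ge> 1" "m(0,4)+m(1,5)+m(2,3) \<ge> 1"
    "m(0,5)+m(1,2)+m(3,4) \<ge> 1" "m(0,5)+m(1,3)+m(2,4) \<ge> 1" "m(0,5)+m(1,4)+m(2,3) \<ge> 1"
  shows "(\<Sum>p\<in>L15. m p) \<ge> 5"
proof -
  have A: "(1::nat)+(1::nat)+(1::nat)+(1::nat)+(1::nat)+(1::nat)+(1::nat)+(1::nat)+(1::nat)+(1::nat)+(1::nat)+(1::nat)+(1::nat)+(1::nat)+(1::nat) \<le> (m(0,1)+m(2,3)+m(4,5))+(m(0,1)+m(2,4)+m(3,5))+(m(0,1)+m(2,5)+m(3,4))+(m(0,2)+m(1,3)+m(4,5))+(m(0,2)+m(1,4)+m(3,5))+(m(0,2)+m(1,5)+m(3,4))+(m(0,3)+m(1,2)+m(4,5))+(m(0,3)+m(1,4)+m(2,5))+(m(0,3)+m(1,5)+m(2,4))+(m(0,4)+m(1,2)+m(3,5))+(m(0,4)+m(1,3)+m(2,5))+(m(0,4)+m(1,5)+m(2,3))+(m(0,5)+m(1,2)+m(3,4))+(m(0,5)+m(1,3)+m(2,4))+(m(0,5)+m(1,4)+m(2,3))"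
    by (intro add_mono assms)
  have B: "(\<Sum>p\<in>L15. m p) = m(0,1)+m(0,2)+m(0,3)+m(0,4)+m(0,5)+m(1,2)+m(1,3)+m(1,4)+m(1,5)+m(2,3)+m(2,4)+m(2,5)+m(3,4)+m(3,5)+m(4,5)"
    by (simp add: L15_def)
  show ?thesis using A unfolding B by simp
qed

lemma fano_lemma:
  assumes S: "S \<subseteq> V" "\<forall>v5. v5 \<subseteq> S \<and> card v5 = 3 \<longrightarrow> v5 \<in> E"
    and z: "z \<in> V" "z \<notin> S"
    and mem: "v1 \<in> S" "v2 \<in> S" "v3 \<in> S" "v4 \<in> S" "v5 \<in> S" "v6 \<in> S"
    and dist: "distinct [v1,v2,v3,v4,v5,v6]"
    and E: "{z,v1,v2} \<in> E" "{z,v3,v4} \<in> E" "{z,v5,v6} \<in> E"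
  shows "contains_fano V E"
proof -
  define h where "h = (\<lambda>n::nat. if n=1 then v1 else if n=2 then v5 else if n=3 then v3 else if n=4 then v2
      else if n=5 then v6 else if n=6 then v4 else z)"
  have I: "{1..7::nat} = {1,2,3,4,5,6,7}" by auto
  have zn: "z \<noteq> v1" "z \<noteq> v2" "z \<noteq> v3" "z \<noteq> v4" "z \<noteq> v5" "z \<noteq> v6" using z mem by auto
  have "inj_on h {1..7}" unfolding I using dist zn by (auto simp: inj_on_def h_def)
  moreover have "h ` {1..7} \<subseteq> V" unfolding I using S z mem by (auto simp: h_def)
  moreover have "\<forall>x\<in>fano_edges. h ` x \<in> E"
  proof -
    have t: "\<And>p q r. p \<in> S \<Longrightarrow> q \<in> S \<Longrightarrow> r \<in> S \<Longrightarrow> p\<noteq>q \<Longrightarrow> p\<noteq>r \<Longrightarrow> q\<noteq>r \<Longrightarrow> {p,q,r} \<in> E"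
      using S(2) by (metis card_3_iff empty_subsetI insert_subset)
    have d: "v1\<noteq>v2" "v1\<noteq>v3" "v1\<noteq>v4" "v1\<noteq>v5" "v1\<noteq>v6" "v2\<noteq>v3" "v2\<noteq>v4"
      "v2\<noteq>v5" "v2\<noteq>v6" "v3\<noteq>v4" "v3\<noteq>v5" "v3\<noteq>v6" "v4\<noteq>v5" "v4\<noteq>v6" "v5\<noteq>v6"
      using dist by auto
    have e1: "h ` {1,2,3} = {v1,v5,v3}" by (auto simp add: h_def)
    have e2: "h ` {3,4,5} = {v3,v2,v6}" by (auto simp add: h_def)
    have e3: "h ` {1,5,6} = {v1,v6,v4}" by (auto simp add: h_def)
    have e4: "h ` {1,4,7} = {z,v1,v2}" by (auto simp add: h_def)
    have e5: "h ` {3,6,7} = {z,v3,v4}" by (auto simp add: h_def)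
    have e6: "h ` {2,5,7} = {z,v5,v6}" by (auto simp add: h_def)
    have e7: "h ` {2,4,6} = {v5,v2,v4}" by (auto simp add: h_def)
    show ?thesis unfolding fano_edges_def
      using t[of v1 v5 v3] t[of v3 v2 v6] t[of v1 v6 v4] t[of v5 v2 v4] mem d E e1 e2 e3 e4 e5 e6 e7
      by simp
  qed
  ultimately show ?thesis unfolding contains_fano_def by blast
qed


lemma link_lemma:
  assumes S: "S \<subseteq> V" "\<forall>e. e \<subseteq> S \<and> card e = 3 \<longrightarrow> e \<in> E"
    and z: "z \<in> V" "z \<notin> S"
    and g: "bij_betw g {0..<6::nat} S"
    and nf: "\<not> contains_fano V E"
  shows "card ((\<lambda>(i,j). {z,g i,g j}) ` {p\<in>L15. (case p of (i,j) \<Rightarrow> {z,g i,g j}) \<notin> E}) \<ge> 5"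
proof -
  let ?F = "\<lambda>(i,j). {z,g i,g j}"
  define m where "m = (\<lambda>p. if ?F p \<in> E then 0 else (1::nat))"
  have gS: "g i \<in> S" if "i < 6" for i using g that by (auto simp: bij_betw_def)
  have ginj: "g i = g j \<longleftrightarrow> i = j" if "i < 6" "j < 6" for i j
    using g that by (auto simp: bij_betw_def inj_on_def)
  have M: "m(a,b)+m(c,d)+m(e,f) \<ge> 1" if "distinct [a,b,c,d,e,f]" "a<6" "b<6" "c<6" "d<6" "e<6" "f<6" for a b c d e f
  proof (rule ccontr)
    assume "\<not> ?thesis"
    hence "{z,g a,g b} \<in> E" "{z,g c,g d} \<in> E" "{z,g e,g f} \<in> E"
      by (auto simp: m_def split: if_splits)
    moreover have "distinct [g a,g b,g c,g d,g e,g f]" using that ginj by auto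
    ultimately have "contains_fano V E"
      using fano_lemma[OF S z, of "g a" "g b" "g c" "g d" "g e" "g f"] gS that by blast
    thus False using nf by simp
  qed
  have "(\<Sum>p\<in>L15. m p) \<ge> 5"
    by (rule match_count; rule M; simp)
  also have "(\<Sum>p\<in>L15. m p) = card {p\<in>L15. ?F p \<notin> E}"
    proof -
    have fin: "finite L15" by (simp add: L15_def)
    have "card {p\<in>L15. ?F p \<notin> E} = (\<Sum>p\<in>L15. if ?F p \<notin> E then 1 else 0)"
      using sum.inter_filter[OF fin, of "\<lambda>_. 1::nat" "\<lambda>p. ?F p \<notin> E"] by simp
    moreover have "(\<Sum>p\<in>L15. m p) = (\<Sum>p\<in>L15. if ?F p \<notin> E then 1 else 0)"
      by (rule sum.cong) (auto simp: m_def)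
    ultimately show ?thesis by simp
  qed
  also have "\<dots> = card (?F ` {p\<in>L15. ?F p \<notin> E})"
  proof (rule card_image[symmetric], rule inj_onI)
    fix p q assume p: "p \<in> {p\<in>L15. ?F p \<notin> E}" and q: "q \<in> {p\<in>L15. ?F p \<notin> E}" and eq: "?F p = ?F q"
    obtain i j where pij: "p = (i,j)" "i<j" "j<6" using p by (auto simp: L15_def)
    obtain k l where qkl: "q = (k,l)" "k<l" "l<6" using q by (auto simp: L15_def)
    have zi: "z \<noteq> g i" "z \<noteq> g j" "z \<noteq> g k" "z \<noteq> g l" using gS z pij qkl by auto
    have h1: "{g i, g j} = ?F p - {z}" using zi pij by auto
    have h2: "{g k, g l} = ?F q - {z}" using zi qkl by auto
    have "{g i, g j} = {g k, g l}" using h1 h2 eq by simp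
    hence "{i,j} = {k,l}" using ginj pij qkl by (auto simp: doubleton_eq_iff)
    thus "p = q" using pij qkl by (auto simp: doubleton_eq_iff)
  qed
  finally show ?thesis .
qed

theorem fact2p4:
  fixes V :: "'a set" and E :: "'a set set"
  assumes "finite V" and "card V = 8" and "uniform3 V E"
    and "\<not> contains_fano V E"
    and "contains_K6_3 V E"
  shows "card E \<le> 46 \<and> 46 < b 8 \<and> b 8 = 48"
proof -
  have b8: "b 8 = 48" by (simp add: b_def)
  obtain S where S: "S \<subseteq> V" "card S = 6" "\<forall>e. e \<subseteq> S \<and> card e = 3 \<longrightarrow> e \<in> E"
    using assms(5) unfolding contains_K6_3_def by blast
  have finS: "finite S" using S(1) assms(1) finite_subset by blast
  have "card (V - S) = 2" using S(1,2) assms(1,2) finS by (simp add: card_Diff_subset)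
  then obtain x y where xy: "V - S = {x,y}" "x \<noteq> y" by (auto simp: card_2_iff)
  obtain g where g: "bij_betw g {0..<6::nat} S" using ex_bij_betw_nat_finite[OF finS] S(2) by auto
  have gS: "g i \<in> S" if "i < 6" for i using g that by (auto simp: bij_betw_def)
  let ?M = "\<lambda>z. (\<lambda>(i,j). {z,g i,g j}) ` {p\<in>L15. (case p of (i,j) \<Rightarrow> {z,g i,g j}) \<notin> E}"
  have Mx: "card (?M x) \<ge> 5"
    by (rule link_lemma[OF S(1) S(3) _ _ g assms(4)]) (use xy in auto)
  have My: "card (?M y) \<ge> 5"
    by (rule link_lemma[OF S(1) S(3) _ _ g assms(4)]) (use xy in auto)
  define T where "T = {B. B \<subseteq> V \<and> card B = 3}"
  have cT: "card T = 56" unfolding T_def using n_subsets[OF assms(1), of 3] assms(2)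
    by (simp add: numeral_eq_Suc)
  have finT: "finite T" unfolding T_def using assms(1) by simp
  have L6: "\<And>i j. (i,j) \<in> L15 \<Longrightarrow> i < 6 \<and> j < 6 \<and> i \<noteq> j" by (auto simp: L15_def)
  have MT: "?M z \<subseteq> T - E" if "z \<in> V" "z \<notin> S" for z
  proof
    fix t assume "t \<in> ?M z"
    then obtain i j where ij: "(i,j) \<in> L15" "t = {z,g i,g j}" "t \<notin> E" by auto
    have "g i \<noteq> g j" using g L6[OF ij(1)] by (auto simp: bij_betw_def inj_on_def)
    moreover have "z \<noteq> g i" "z \<noteq> g j" using gS L6[OF ij(1)] that by auto
    ultimately have "card t = 3" using ij by simp
    moreover have "t \<subseteq> V" using ij gS L6[OF ij(1)] S(1) that by auto
    ultimately show "t \<in> T - E" using ij unfolding T_def by simp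
  qed
  have MxT: "?M x \<subseteq> T - E" by (rule MT) (use xy in auto)
  have MyT: "?M y \<subseteq> T - E" by (rule MT) (use xy in auto)
  have disj: "?M x \<inter> ?M y = {}"
  proof -
    have A: "x \<notin> t" if "t \<in> ?M y" for t
    proof -
      from that obtain i j where ij: "(i,j) \<in> L15" "t = {y,g i,g j}" by auto
      have "x \<notin> S" using xy by auto
      thus ?thesis using ij gS L6[OF ij(1)] xy(2) by auto
    qed
    have B: "x \<in> t" if "t \<in> ?M x" for t using that by auto
    show ?thesis
    proof (rule equals0I)
      fix t assume "t \<in> ?M x \<inter> ?M y"
      hence "t \<in> ?M x" "t \<in> ?M y" by (rule IntD1, rule IntD2)
      thus False using A[of t] B[of t] by simp
    qed
  qed
  have finM: "finite (?M x)" "finite (?M y)"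
    by (rule finite_subset[OF MxT], use finT in simp, rule finite_subset[OF MyT], use finT in simp)
  have cU: "card (?M x \<union> ?M y) \<ge> 10" using card_Un_disjoint[OF finM disj] Mx My by simp
  have "E \<subseteq> T - (?M x \<union> ?M y)"
  proof -
    have "E \<subseteq> T" using assms(3) unfolding uniform3_def T_def by auto
    thus ?thesis using MxT MyT by blast
  qed
  hence "card E \<le> card (T - (?M x \<union> ?M y))" using finT by (intro card_mono) auto
  also have "\<dots> = card T - card (?M x \<union> ?M y)"
    using MxT MyT finM by (intro card_Diff_subset) auto
  finally have "card E \<le> 46" using cT cU by simp
  thus ?thesis using b8 by simp
qed

end
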